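(* Let $(G,k)$ be a connected quadratic Lie group with Lie algebra $\mathcal G$, and let $\langle x,y\rangle=k(u(x),y)$ be a flat left invariant semi-Riemannian metric on $G$, where $u$ is a $k$-symmetric linear isomorphism of $\mathcal G$. Let $L_x:y\mapsto xy$ denote left multiplication for the Levi-Civita product. Then $L_e^2=0$ for every $e\in\mathcal Z(\mathcal G)$. If moreover $\langle\,,\,\rangle$ is Riemannian or Lorentzian, then $L_e=0$ for every $e\in\mathcal Z(\mathcal G)$, and $u(\mathcal Z(\mathcal G))\subset\mathcal Z(\mathcal G)$.
   Context: A quadratic Lie group is a Lie group $G$ with a bi-invariant semi-Riemannian metric $k$; equivalently $k$ is a nondegenerate symmetric bilinear form on $\mathcal G$ with each $\mathrm{ad}_x$ $k$-skew-symmetric. The Levi-Civita product of a left invariant metric is the bilinear product on $\mathcal G$ defined by $(xy)^+=\nabla_{x^+}y^+$, where $x^+$ is the left invariant vector field with value $x$ at the unit and $\nabla$ the Levi-Civita connection; it is determined by the Koszul formula $2\langle xy,z\rangle=\langle[x,y],z\rangle-\langle[y,z],x\rangle+\langle[z,x],y\rangle$. $\mathcal Z(\mathcal G)$ is the center of $\mathcal G$. *)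

theory Defs
  imports "HOL-Analysis.Analysis"
begin

text \<open>A finite-dimensional real Lie algebra: the carrier is a type of class euclidean_space
  (only its finite-dimensional real vector space structure is used), br is the bracket.\<close>
definition lie_algebra :: "('a::euclidean_space \<Rightarrow> 'a \<Rightarrow> 'a) \<Rightarrow> bool" where
  "lie_algebra br \<longleftrightarrow> bilinear br \<and> (\<forall>x. br x x = 0) \<and>
     (\<forall>x y z. br x (br y z) + br y (br z x) + br z (br x y) = 0)"

definition sym_bilinear_nondeg :: "('a::euclidean_space \<Rightarrow> 'a \<Rightarrow> real) \<Rightarrow> bool" where
  "sym_bilinear_nondeg k \<longleftrightarrow> bilinear k \<and> (\<forall>x y. k x y = k y x) \<and>
     (\<forall>x. (\<forall>y. k x y = 0) \<longrightarrow> x = 0)"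

definition quadratic_form :: "('a::euclidean_space \<Rightarrow> 'a \<Rightarrow> 'a) \<Rightarrow> ('a \<Rightarrow> 'a \<Rightarrow> real) \<Rightarrow> bool" where
  "quadratic_form br k \<longleftrightarrow> sym_bilinear_nondeg k \<and>
     (\<forall>x y z. k (br x y) z = - k y (br x z))"

text \<open>Levi-Civita product of the metric g, determined by the Koszul formula.\<close>
definition lc_prod :: "('a::euclidean_space \<Rightarrow> 'a \<Rightarrow> 'a) \<Rightarrow> ('a \<Rightarrow> 'a \<Rightarrow> real) \<Rightarrow> 'a \<Rightarrow> 'a \<Rightarrow> 'a" where
  "lc_prod br g x y = (THE w. \<forall>z. 2 * g w z = g (br x y) z - g (br y z) x + g (br z x) y)"

definition flat :: "('a::euclidean_space \<Rightarrow> 'a \<Rightarrow> 'a) \<Rightarrow> ('a \<Rightarrow> 'a \<Rightarrow> real) \<Rightarrow> bool" where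
  "flat br g \<longleftrightarrow> (\<forall>x y z. lc_prod br g (br x y) z =
      lc_prod br g x (lc_prod br g y z) - lc_prod br g y (lc_prod br g x z))"

definition center :: "('a::euclidean_space \<Rightarrow> 'a \<Rightarrow> 'a) \<Rightarrow> 'a set" where
  "center br = {e. \<forall>x. br e x = 0}"

definition riemannian :: "('a::euclidean_space \<Rightarrow> 'a \<Rightarrow> real) \<Rightarrow> bool" where
  "riemannian g \<longleftrightarrow> (\<forall>x. x \<noteq> 0 \<longrightarrow> g x x > 0)"

definition neg_definite_on :: "('a::euclidean_space \<Rightarrow> 'a \<Rightarrow> real) \<Rightarrow> 'a set \<Rightarrow> bool" where
  "neg_definite_on g W \<longleftrightarrow> (\<forall>x\<in>W. x \<noteq> 0 \<longrightarrow> g x x < 0)"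

definition lorentzian :: "('a::euclidean_space \<Rightarrow> 'a \<Rightarrow> real) \<Rightarrow> bool" where
  "lorentzian g \<longleftrightarrow> (\<exists>W. subspace W \<and> dim W = 1 \<and> neg_definite_on g W) \<and>
     (\<forall>W. subspace W \<and> neg_definite_on g W \<longrightarrow> dim W \<le> 1)"

end

theory Submission
  imports Defs
begin

locale qset =
  fixes br :: "'a::euclidean_space \<Rightarrow> 'a \<Rightarrow> 'a"
    and k :: "'a \<Rightarrow> 'a \<Rightarrow> real"
    and u :: "'a \<Rightarrow> 'a"
  assumes lie: "lie_algebra br"
    and quad: "quadratic_form br k"
    and lu: "linear u" and bu: "bij u"
    and symu: "\<forall>x y. k (u x) y = k x (u y)"
begin

definition g where "g x y = k (u x) y"
definition v where "v = inv u"
definition P where "P x y = (1/2) *\<^sub>R (v (br x (u y) - br (u x) y) + br x y)"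

lemma bbr: "bilinear br" using lie unfolding lie_algebra_def by auto
lemma bk: "bilinear k" using quad unfolding quadratic_form_def sym_bilinear_nondeg_def by auto
lemma symk: "k x y = k y x" using quad unfolding quadratic_form_def sym_bilinear_nondeg_def by auto
lemma ndk: "(\<And>y. k x y = 0) \<Longrightarrow> x = 0" using quad unfolding quadratic_form_def sym_bilinear_nondeg_def by auto
lemma invk: "k (br x y) z = - k y (br x z)" using quad unfolding quadratic_form_def by auto
lemma brxx: "br x x = 0" using lie unfolding lie_algebra_def by auto
lemma anti: "br y x = - br x y"
proof -
  have "br (x+y) (x+y) = 0" by (rule brxx)
  hence "br x x + br x y + br y x + br y y = 0"
    using bbr by (simp add: bilinear_ladd bilinear_radd add.assoc)
  thus ?thesis by (simp add: brxx eq_neg_iff_add_eq_0 add.commute)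
qed

lemma uv: "u (v x) = x" unfolding v_def using bu by (simp add: bij_is_surj surj_f_inv_f)
lemma vu: "v (u x) = x" unfolding v_def using bu by (simp add: bij_is_inj)
lemma lv: "linear v"
proof (rule linearI)
  fix a b show "v (a + b) = v a + v b"
    by (metis linear_add[OF lu] uv vu)
next
  fix c a show "v (c *\<^sub>R a) = c *\<^sub>R v a"
    by (metis linear_scale[OF lu] uv vu)
qed

lemma gsym: "g x y = g y x" unfolding g_def using symu symk by metis
lemma bg: "bilinear g"
  unfolding bilinear_def g_def
proof
  show "\<forall>x. linear (\<lambda>y. k (u x) y)" using bk unfolding bilinear_def by auto
  show "\<forall>y. linear (\<lambda>x. k (u x) y)"
  proof
    fix y
    have "linear (\<lambda>x. k x y)" using bk unfolding bilinear_def by auto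
    thus "linear (\<lambda>x. k (u x) y)" using lu linear_compose[of u "\<lambda>x. k x y"] by (simp add: o_def)
  qed
qed
lemma ndg: "(\<And>y. g x y = 0) \<Longrightarrow> x = 0"
proof -
  assume "\<And>y. g x y = 0"
  hence "u x = 0" using ndk unfolding g_def by auto
  hence "v (u x) = v 0" by simp
  thus "x = 0" using vu linear_0[OF lv] by simp
qed

lemma koszulP: "2 * g (P x y) z = g (br x y) z - g (br y z) x + g (br z x) y"
proof -
  have uP: "u (P x y) = (1/2) *\<^sub>R (br x (u y) - br (u x) y + u (br x y))"
    unfolding P_def using lu uv by (simp add: linear_scale linear_add)
  have L: "2 * g (P x y) z = k (br x (u y)) z - k (br (u x) y) z + k (u (br x y)) z"
    unfolding g_def uP using bk by (simp add: bilinear_lmul bilinear_ladd bilinear_lsub)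
  have A: "g (br y z) x = k (br (u x) y) z"
  proof -
    have "g (br y z) x = k (u x) (br y z)" unfolding g_def using symu symk by metis
    also have "\<dots> = - k (br y (u x)) z" using invk by simp
    also have "\<dots> = k (br (u x) y) z" using anti[of "u x" y] bk by (simp add: bilinear_lneg)
    finally show ?thesis .
  qed
  have B: "g (br z x) y = k (br x (u y)) z"
  proof -
    have "g (br z x) y = k (u y) (br z x)" unfolding g_def using symu symk by metis
    also have "\<dots> = - k (u y) (br x z)" using anti[of x z] bk by (simp add: bilinear_rneg)
    also have "\<dots> = k (br x (u y)) z" using invk by simp
    finally show ?thesis .
  qed
  show ?thesis using L A B unfolding g_def by simp
qed

lemma lc_eq: "lc_prod br (\<lambda>x y. k (u x) y) x y = P x y"
proof -
  have gg: "(\<lambda>x y. k (u x) y) = g" unfolding g_def by auto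
  show ?thesis unfolding gg lc_prod_def
  proof (rule the_equality)
    show "\<forall>z. 2 * g (P x y) z = g (br x y) z - g (br y z) x + g (br z x) y" using koszulP by auto
  next
    fix w assume "\<forall>z. 2 * g w z = g (br x y) z - g (br y z) x + g (br z x) y"
    hence "\<forall>z. g (w - P x y) z = 0"
    proof (intro allI)
      fix z assume a: "\<forall>z. 2 * g w z = g (br x y) z - g (br y z) x + g (br z x) y"
      have "2 * g w z = 2 * g (P x y) z" using a koszulP by simp
      thus "g (w - P x y) z = 0" using bg by (simp add: bilinear_lsub)
    qed
    hence "w - P x y = 0" by (intro ndg) auto
    thus "w = P x y" by simp
  qed
qed

lemma skewP: "g (P x y) z = - g y (P x z)"
proof -
  have "2 * g (P x y) z + 2 * g (P x z) y = 0"
    unfolding koszulP using bg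
    by (simp add: bilinear_lneg anti[of x y] anti[of y z] anti[of z x])
  thus ?thesis using gsym by simp
qed

lemma P0: "P 0 z = 0" unfolding P_def using bbr lu lv
  by (simp add: bilinear_lzero bilinear_rzero linear_0)
lemma Pr0: "P z 0 = 0" unfolding P_def using bbr lu lv
  by (simp add: bilinear_lzero bilinear_rzero linear_0)
lemma tors: "P x y - P y x = br x y"
proof -
  have "v (br x (u y) - br (u x) y) = v (br y (u x) - br (u y) x)"
    using anti[of "u x" y] anti[of x "u y"] by (simp add: algebra_simps)
  hence "P x y - P y x = (1/2) *\<^sub>R (br x y - br y x)" unfolding P_def
    by (simp add: algebra_simps)
  moreover have "br x y - br y x = 2 *\<^sub>R br x y" using anti[of y x] by (simp add: scaleR_2)
  ultimately show ?thesis by simp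
qed


lemma flatP: assumes "flat br (\<lambda>x y. k (u x) y)" shows "P (br x y) z = P x (P y z) - P y (P x z)"
  using assms unfolding flat_def lc_eq by auto

lemma cent: "e \<in> center br \<Longrightarrow> br e x = 0" unfolding center_def by auto

lemma Pee: "e \<in> center br \<Longrightarrow> P e e = 0"
  unfolding P_def using cent[of e] anti[of e "u e"] lv by (simp add: linear_0)

lemma Pex: "e \<in> center br \<Longrightarrow> P e x = P x e"
  using tors[of e x] cent[of e x] by simp

lemma part1: assumes "flat br (\<lambda>x y. k (u x) y)" "e \<in> center br" shows "P e (P e x) = 0"
proof -
  have "P (br e x) e = P e (P x e) - P x (P e e)" by (rule flatP[OF assms(1)])
  hence "P e (P x e) = 0" using cent[OF assms(2)] P0 Pee[OF assms(2)] Pr0 by simp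
  thus ?thesis using Pex[OF assms(2)] by simp
qed

lemma nullP: assumes "flat br (\<lambda>x y. k (u x) y)" "e \<in> center br" shows "g (P e x) (P e x) = 0"
  using skewP[of e x "P e x"] part1[OF assms] bg by (simp add: bilinear_rzero)

lemma Pet: "g (P e t) t = 0"
  using skewP[of e t t] gsym[of t "P e t"] by simp

lemma Pe_orth: "P e t = 0 \<Longrightarrow> g (P e x) t = 0"
  using skewP[of e x t] bg by (simp add: bilinear_rzero)

lemma cent_u: assumes "e \<in> center br" "\<forall>y. P e y = 0" shows "u e \<in> center br"
proof -
  { fix y
    have "P e y = (1/2) *\<^sub>R v (- br (u e) y)" unfolding P_def using cent[OF assms(1)] by simp
    hence "v (- br (u e) y) = 0" using assms(2) by simp
    hence "u (v (- br (u e) y)) = 0" using lu by (simp add: linear_0)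
    hence "br (u e) y = 0" using uv by simp }
  thus ?thesis unfolding center_def by auto
qed

end


lemma lor_t:
  fixes g :: "'a::euclidean_space \<Rightarrow> 'a \<Rightarrow> real"
  assumes "lorentzian g" shows "\<exists>t. g t t < 0"
proof -
  obtain W where W: "subspace W" "dim W = 1" "neg_definite_on g W"
    using assms unfolding lorentzian_def by auto
  have "\<not> W \<subseteq> {0}" using W(2) dim_eq_0[of W] by auto
  then obtain t where "t \<in> W" "t \<noteq> 0" by auto
  thus ?thesis using W(3) unfolding neg_definite_on_def by auto
qed

lemma lor_null:
  fixes g :: "'a::euclidean_space \<Rightarrow> 'a \<Rightarrow> real"
  assumes bg: "bilinear g" and gs: "\<And>x y. g x y = g y x"
    and nd: "\<And>x. (\<And>y. g x y = 0) \<Longrightarrow> x = 0"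
    and lor: "lorentzian g" and tt: "g t t < 0" and ss: "g s s = 0" and st: "g s t = 0"
  shows "s = 0"
proof (rule ccontr)
  assume "s \<noteq> 0"
  then obtain z where z: "g s z \<noteq> 0" using nd by blast
  define z' where "z' = z - (g z t / g t t) *\<^sub>R t"
  have z't: "g z' t = 0" unfolding z'_def using bg tt
    by (simp add: bilinear_lsub bilinear_lmul)
  have sz': "g s z' = g s z" unfolding z'_def using bg st gs[of s t]
    by (simp add: bilinear_rsub bilinear_rmul)
  define l where "l = - (g z' z' + 1) / (2 * g s z')"
  define y where "y = z' + l *\<^sub>R s"
  have yt: "g y t = 0" unfolding y_def using bg z't st by (simp add: bilinear_ladd bilinear_lmul)
  have ty: "g t y = 0" using yt gs by metis
  have "g y y = g z' z' + 2 * l * g s z' + l * l * g s s"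
    unfolding y_def using bg gs[of z' s]
    by (simp add: bilinear_ladd bilinear_lmul bilinear_radd bilinear_rmul algebra_simps)
  also have "\<dots> = -1" unfolding l_def using ss sz' z by (simp add: field_simps)
  finally have yy: "g y y = -1" .
  have quad: "g (a *\<^sub>R t + b *\<^sub>R y) (a *\<^sub>R t + b *\<^sub>R y) = a*a * g t t - b*b" for a b
    using bg yt ty yy
    by (simp add: bilinear_ladd bilinear_lmul bilinear_radd bilinear_rmul algebra_simps)
  have neg: "g (a *\<^sub>R t + b *\<^sub>R y) (a *\<^sub>R t + b *\<^sub>R y) < 0" if "a \<noteq> 0 \<or> b \<noteq> 0" for a b
  proof -
    have "a*a * g t t \<le> 0" using tt by (simp add: mult_nonneg_nonpos)
    moreover have "b*b \<ge> 0" by simp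
    moreover have "a*a*g t t < 0 \<or> b*b > 0" using that tt
      by (metis mult_pos_neg not_real_square_gt_zero)
    ultimately show ?thesis unfolding quad by linarith
  qed
  have spanty: "span {t, y} = {a *\<^sub>R t + b *\<^sub>R y | a b. True}"
  proof -
    have "span {t, y} = {x. \<exists>a. x - a *\<^sub>R t \<in> span {y}}" by (rule span_insert)
    also have "\<dots> = {a *\<^sub>R t + b *\<^sub>R y | a b. True}"
      unfolding span_singleton
    proof (intro set_eqI iffI)
      fix x assume "x \<in> {x. \<exists>a. x - a *\<^sub>R t \<in> range (\<lambda>k. k *\<^sub>R y)}"
      then obtain a b where "x - a *\<^sub>R t = b *\<^sub>R y" by auto
      hence "x = a *\<^sub>R t + b *\<^sub>R y" by (simp add: algebra_simps)
      thus "x \<in> {a *\<^sub>R t + b *\<^sub>R y | a b. True}" by auto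
    next
      fix x assume "x \<in> {a *\<^sub>R t + b *\<^sub>R y | a b. True}"
      then obtain a b where "x = a *\<^sub>R t + b *\<^sub>R y" by auto
      hence "x - a *\<^sub>R t = b *\<^sub>R y" by simp
      thus "x \<in> {x. \<exists>a. x - a *\<^sub>R t \<in> range (\<lambda>k. k *\<^sub>R y)}" by auto
    qed
    finally show ?thesis .
  qed
  have "neg_definite_on g (span {t, y})"
    unfolding neg_definite_on_def spanty
  proof (clarify)
    fix a b assume "a *\<^sub>R t + b *\<^sub>R y \<noteq> 0"
    hence "a \<noteq> 0 \<or> b \<noteq> 0" by auto
    thus "g (a *\<^sub>R t + b *\<^sub>R y) (a *\<^sub>R t + b *\<^sub>R y) < 0" by (rule neg)
  qed
  hence "dim (span {t, y}) \<le> 1" using lor unfolding lorentzian_def by auto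
  moreover have "dim (span {t, y}) = 2"
  proof -
    have ty_ne: "t \<noteq> y" using tt ty by auto
    have y0: "y \<noteq> 0" using yy bg by (auto simp: bilinear_lzero)
    have "t \<notin> span {y}"
    proof
      assume "t \<in> span {y}"
      then obtain c where "t = c *\<^sub>R y" unfolding span_singleton by auto
      hence "g t y = - c" using yy bg by (simp add: bilinear_lmul)
      hence "c = 0" using ty by simp
      thus False using \<open>t = c *\<^sub>R y\<close> tt bg by (simp add: bilinear_lzero)
    qed
    hence "independent {t, y}" using y0 ty_ne by (simp add: independent_insert)
    hence "dim (span {t, y}) = card {t, y}" by (rule dim_span_eq_card_independent)
    thus ?thesis using ty_ne by simp
  qed
  ultimately show False by simp
qed

theorem mainTheorem11:
  fixes br :: "'a::euclidean_space \<Rightarrow> 'a \<Rightarrow> 'a"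
    and k :: "'a \<Rightarrow> 'a \<Rightarrow> real"
    and u :: "'a \<Rightarrow> 'a"
  assumes "lie_algebra br"
    and "quadratic_form br k"
    and "linear u" and "bij u"
    and "\<forall>x y. k (u x) y = k x (u y)"
    and "flat br (\<lambda>x y. k (u x) y)"
  shows "(\<forall>e\<in>center br. \<forall>x. lc_prod br (\<lambda>x y. k (u x) y) e (lc_prod br (\<lambda>x y. k (u x) y) e x) = 0)
    \<and> ((riemannian (\<lambda>x y. k (u x) y) \<or> lorentzian (\<lambda>x y. k (u x) y)) \<longrightarrow>
         (\<forall>e\<in>center br. (\<forall>x. lc_prod br (\<lambda>x y. k (u x) y) e x = 0)) \<and> u ` center br \<subseteq> center br)"
proof -
  interpret q: qset br k u using assms(1-5) by (simp add: qset_def)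
  have gg: "(\<lambda>x y. k (u x) y) = q.g" unfolding q.g_def by auto
  have P1: "\<forall>e\<in>center br. \<forall>x. q.P e (q.P e x) = 0" using q.part1[OF assms(6)] by auto
  have P2: "\<forall>e\<in>center br. \<forall>x. q.P e x = 0"
    if h: "riemannian q.g \<or> lorentzian q.g"
  proof (intro ballI allI)
    fix e x assume e: "e \<in> center br"
    have nl: "q.g (q.P e y) (q.P e y) = 0" for y using q.nullP[OF assms(6) e] .
    show "q.P e x = 0"
    proof (cases "riemannian q.g")
      case True thus ?thesis using nl[of x] unfolding riemannian_def by force
    next
      case False
      hence lor: "lorentzian q.g" using h by auto
      obtain t where tt: "q.g t t < 0" using lor_t[OF lor] by auto
      have ln: "s = 0" if "q.g s s = 0" "q.g s t = 0" for s
        using lor_null[OF q.bg q.gsym _ lor tt that] q.ndg by blast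
      have "q.P e t = 0" using ln nl[of t] q.Pet[of e t] by simp
      thus ?thesis using ln nl[of x] q.Pe_orth by simp
    qed
  qed
  have lceq: "lc_prod br q.g = q.P" using q.lc_eq unfolding gg by (intro ext) auto
  show ?thesis unfolding gg lceq using P1 P2 q.cent_u by blast
qed

end
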